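(* Let $M=\{D_1,\dots,D_m\}$, $m\ge3$, be a 2-disk system of pairwise distinct disks with Vietoris–Rips scale $\nu_M>0$, and let $\lambda\ge\nu_M$. Then $\bigcap_{i=1}^m D(c_i;\lambda r_i)\ne\emptyset$ if and only if $\rho_M(\lambda)\ge0$. In particular $\rho_M(\sqrt{4/3}\,\nu_M)\ge0$.
   Context: A 2-disk system is a finite collection of closed disks $D_i=D(c_i;r_i)\subset\mathbb R^2$ with $r_i>0$; $\partial D$ is the boundary circle. $\nu_M=\max_{i<j}\|c_i-c_j\|/(r_i+r_j)$ is the Vietoris–Rips scale. Definition of $d_{ij}$ for two intersecting disks $D_i,D_j$ ($i\ne j$): write $c_j-c_i=(a,b)$, $\mathbf n_{ij}=(-b,a)$. (1) If $\partial D_i\cap\partial D_j\ne\emptyset$, $d_{ij}$ is the unique point of $\partial D_i\cap\partial D_j$ with $\langle d_{ij}-c_i,\mathbf n_{ij}\rangle\ge0$. (2) If $\partial D_i\cap\partial D_j=\emptyset$, let $\lambda_0=\|c_i-c_j\|/|r_i-r_j|$ and $d_{ij}$ is the unique point of $\partial D(c_i;\lambda_0 r_i)\cap\partial D(c_j;\lambda_0 r_j)$ (equal to $c_i$ if $c_i=c_j$). $d_{ij}(\lambda)$ denotes this point for the rescaled disks $D(c_i;\lambda r_i),D(c_j;\lambda r_j)$. For $\lambda\ge\nu_M$, $\rho_M(\lambda)=\max_{i\ne j}\min_{k\notin\{i,j\}}\big(\lambda r_k-\|d_{ij}(\lambda)-c_k\|\big)$. *)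

theory Defs
  imports "HOL-Analysis.Analysis"
begin

text \<open>A disk system with m disks is given by centres c i and radii r i for i < m;
  the disk D(c;r) is cball c r and its boundary circle is sphere c r.\<close>

definition nvec :: "real \<times> real \<Rightarrow> real \<times> real" where
  "nvec v = (- snd v, fst v)"

definition vr_scale :: "nat \<Rightarrow> (nat \<Rightarrow> real \<times> real) \<Rightarrow> (nat \<Rightarrow> real) \<Rightarrow> real" where
  "vr_scale m c r = Max {dist (c i) (c j) / (r i + r j) | i j. i < j \<and> j < m}"

definition dpt :: "real \<times> real \<Rightarrow> real \<Rightarrow> real \<times> real \<Rightarrow> real \<Rightarrow> real \<times> real" where
  "dpt ci ri cj rj =
    (if sphere ci ri \<inter> sphere cj rj \<noteq> {}
     then (THE p. p \<in> sphere ci ri \<inter> sphere cj rj \<and> inner (p - ci) (nvec (cj - ci)) \<ge> 0)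
     else if ci = cj then ci
     else (let l0 = dist ci cj / \<bar>ri - rj\<bar>
           in THE p. p \<in> sphere ci (l0 * ri) \<inter> sphere cj (l0 * rj)))"

definition dpt_scaled :: "(nat \<Rightarrow> real \<times> real) \<Rightarrow> (nat \<Rightarrow> real) \<Rightarrow> real \<Rightarrow> nat \<Rightarrow> nat \<Rightarrow> real \<times> real" where
  "dpt_scaled c r lam i j = dpt (c i) (lam * r i) (c j) (lam * r j)"

definition rho :: "nat \<Rightarrow> (nat \<Rightarrow> real \<times> real) \<Rightarrow> (nat \<Rightarrow> real) \<Rightarrow> real \<Rightarrow> real" where
  "rho m c r lam = Max {Min {lam * r k - norm (dpt_scaled c r lam i j - c k) | k. k < m \<and> k \<noteq> i \<and> k \<noteq> j}
                        | i j. i < m \<and> j < m \<and> i \<noteq> j}"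

end

theory Submission
  imports Defs
begin


lemma dist_sq: "(dist (x::real\<times>real) y)^2 = (fst x - fst y)^2 + (snd x - snd y)^2"
  by (cases x; cases y) (simp add: dist_Pair_Pair dist_real_def)

lemma inner_nvec: "inner (u::real\<times>real) (nvec v) = snd u * fst v - fst u * snd v"
  by (cases u; cases v) (simp add: nvec_def)

lemma flip: "inner (z - q) (nvec (p - q)) = - inner (z - p) (nvec (q - (p::real\<times>real)))"
  by (simp add: inner_nvec algebra_simps)

lemma tangent_pt:
  fixes p q :: "real \<times> real"
  assumes "p \<noteq> q" "A \<ge> 0" "B \<ge> 0" "\<bar>A - B\<bar> = dist p q"
  shows "\<exists>y. dist p y = A \<and> dist q y = B \<and> inner (y - p) (nvec (q - p)) = 0"
proof -
  define d where "d = dist p q"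
  have d: "d > 0" using assms(1) d_def by simp
  have nd: "norm (q - p) = d" by (simp add: d_def dist_norm norm_minus_commute)
  have z: "\<And>t. inner (t *\<^sub>R (q - p)) (nvec (q - p)) = 0"
    by (simp add: inner_nvec algebra_simps)
  show ?thesis
  proof (cases "A \<ge> B")
    case True
    define y where "y = p + (A/d) *\<^sub>R (q - p)"
    have "dist p y = A" using d nd assms(2) by (simp add: y_def dist_norm)
    moreover have "y - q = (A/d - 1) *\<^sub>R (q - p)" by (simp add: y_def algebra_simps)
    hence "dist q y = \<bar>A/d - 1\<bar> * d" using nd
      by (metis dist_commute dist_norm norm_minus_commute norm_scaleR real_norm_def)
    hence "dist q y = B" using True assms(3,4) d unfolding d_def[symmetric]
      by (simp add: abs_if field_simps split: if_splits)
    moreover have "inner (y - p) (nvec (q - p)) = 0" using z by (simp add: y_def)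
    ultimately show ?thesis by blast
  next
    case False
    define y where "y = q + (B/d) *\<^sub>R (p - q)"
    have "dist q y = B" using d nd assms(3) by (simp add: y_def dist_norm norm_minus_commute)
    moreover have "y - p = (1 - B/d) *\<^sub>R (q - p)" by (simp add: y_def algebra_simps)
    hence "dist p y = \<bar>1 - B/d\<bar> * d" using nd
      by (metis dist_commute dist_norm norm_minus_commute norm_scaleR real_norm_def)
    hence "dist p y = A" using False assms(2,4) d unfolding d_def[symmetric]
      by (simp add: abs_if field_simps split: if_splits)
    moreover have "inner (y - p) (nvec (q - p)) = 0" using z[of "1 - B/d"] \<open>y - p = _\<close> by simp
    ultimately show ?thesis by blast
  qed
qed

lemma exists_int:
  fixes p q :: "real \<times> real"
  assumes "p \<noteq> q" "A \<ge> 0" "B \<ge> 0" "\<bar>A - B\<bar> \<le> dist p q" "dist p q \<le> A + B"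
  shows "\<exists>x. dist p x = A \<and> dist q x = B"
proof -
  define v1 where "v1 = fst q - fst p"
  define v2 where "v2 = snd q - snd p"
  define V where "V = v1^2 + v2^2"
  define d where "d = dist p q"
  have Vd: "V = d^2" using dist_sq[of q p] unfolding V_def v1_def v2_def d_def by (simp add: dist_commute)
  have d: "d > 0" using assms(1) d_def by simp
  define s where "s = (V + A^2 - B^2) / (2*V)"
  have "4*A^2*d^2 \<ge> (d^2+A^2-B^2)^2"
  proof -
    have h1: "A + d \<ge> B" "B \<ge> A - d" "B \<ge> d - A" using assms(4,5) unfolding d_def by linarith+
    have eq: "(2*A*d)^2 - (d^2+A^2-B^2)^2 = ((A+d)^2 - B^2) * (B^2 - (A-d)^2)"
      by (simp add: power2_eq_square algebra_simps)
    have p1: "(A+d)^2 - B^2 \<ge> 0" using h1 assms(3) d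
      by (smt (verit) mult_mono power2_eq_square)
    have p2: "B^2 - (A-d)^2 \<ge> 0"
    proof -
      have "\<bar>A-d\<bar> \<le> \<bar>B\<bar>" using h1 assms(3) by linarith
      thus ?thesis by (simp add: abs_le_square_iff)
    qed
    have "((A+d)^2 - B^2) * (B^2 - (A-d)^2) \<ge> 0" using p1 p2 by simp
    hence "(d^2+A^2-B^2)^2 \<le> (2*A*d)^2" using eq by linarith
    thus ?thesis by (simp add: power_mult_distrib)
  qed
  hence hh: "A^2/V - s^2 \<ge> 0" using d unfolding s_def Vd
    by (simp add: field_simps power2_eq_square)
  define h where "h = sqrt (A^2/V - s^2)"
  have h2: "h^2 = A^2/V - s^2" using hh h_def by simp
  define x where "x = (fst p + s * v1 - h * v2, snd p + s * v2 + h * v1)"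
  have Vp: "V > 0" using Vd d by simp
  have "(dist p x)^2 = A^2"
  proof -
    have "(dist p x)^2 = (s^2 + h^2) * V" unfolding dist_sq x_def V_def
      by (simp add: power2_eq_square algebra_simps)
    thus ?thesis using h2 Vp by (simp add: field_simps)
  qed
  moreover have "(dist q x)^2 = B^2"
  proof -
    have "(dist q x)^2 = ((s-1)^2 + h^2) * V" unfolding dist_sq x_def V_def v1_def v2_def
      by (simp add: power2_eq_square algebra_simps)
    also have "\<dots> = (A^2/V - 2 * s + 1) * V" using h2 by (simp add: power2_eq_square algebra_simps)
    also have "\<dots> = A^2 - 2 * s*V + V" using Vp by (simp add: field_simps)
    also have "2 * s*V = V + A^2 - B^2" using Vp unfolding s_def by simp
    finally show ?thesis by simp
  qed
  ultimately show ?thesis using assms(2,3)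
    by (metis power2_eq_iff_nonneg zero_le_dist)
qed

lemma dist_eq_sq: "a \<ge> 0 \<Longrightarrow> dist (x::real\<times>real) y = a \<longleftrightarrow> (fst x - fst y)^2 + (snd x - snd y)^2 = a^2"
  by (metis dist_sq zero_le_dist power2_eq_iff_nonneg)

lemma uniq:
  fixes p q y z :: "real \<times> real"
  assumes "p \<noteq> q" "dist p y = A" "dist p z = A" "dist q y = B" "dist q z = B"
    "inner (y-p) (nvec (q-p)) \<ge> 0" "inner (z - p) (nvec (q-p)) \<ge> 0"
  shows "y = z"
proof -
  define u1 where "u1 = fst y - fst p"
  define u2 where "u2 = snd y - snd p"
  define w1 where "w1 = fst z - fst p"
  define w2 where "w2 = snd z - snd p"
  define v1 where "v1 = fst q - fst p"
  define v2 where "v2 = snd q - snd p"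
  have e1: "u1^2+u2^2 = w1^2+w2^2" using assms(2,3) dist_sq[of p y] dist_sq[of p z]
    unfolding u1_def u2_def w1_def w2_def by (simp add: power2_commute)
  have e2: "(u1-v1)^2+(u2-v2)^2 = (w1-v1)^2+(w2-v2)^2" using assms(4,5) dist_sq[of q y] dist_sq[of q z]
    unfolding u1_def u2_def w1_def w2_def v1_def v2_def by (simp add: power2_commute)
  have c1: "v1 * u2 - v2 * u1 \<ge> 0" using assms(6) unfolding u1_def u2_def v1_def v2_def
    by (simp add: inner_nvec algebra_simps)
  have c2: "v1 * w2 - v2 * w1 \<ge> 0" using assms(7) unfolding w1_def w2_def v1_def v2_def
    by (simp add: inner_nvec algebra_simps)
  have ex: "\<And>a b. (a-v1)^2+(b-v2)^2 = (a^2+b^2) - 2*(a * v1+b * v2) + (v1^2+v2^2)"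
    by (simp add: power2_eq_square algebra_simps)
  have dot: "u1 * v1+u2 * v2 = w1 * v1+w2 * v2" using e1 e2 ex[of u1 u2] ex[of w1 w2] by (smt (verit))
  have id: "\<And>a b. (v1^2+v2^2) * (a^2+b^2) = (a * v1+b * v2)^2 + (v1 * b-v2 * a)^2"
    by (simp add: power2_eq_square algebra_simps)
  have "(v1 * u2 - v2 * u1)^2 = (v1 * w2 - v2 * w1)^2" using id[of u1 u2] id[of w1 w2] e1 dot by (smt (verit))
  hence cr: "v1 * u2 - v2 * u1 = v1 * w2 - v2 * w1" using c1 c2 power2_eq_iff_nonneg by blast
  have vnz: "v1^2+v2^2 \<noteq> 0" using assms(1) unfolding v1_def v2_def
    by (auto simp add: prod_eq_iff sum_power2_eq_zero_iff)
  have i1: "\<And>a b. a*(v1^2+v2^2) = (a * v1+b * v2) * v1 - (v1 * b-v2 * a) * v2"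
    "\<And>a b. b*(v1^2+v2^2) = (a * v1+b * v2) * v2 + (v1 * b-v2 * a) * v1"
    by (simp_all add: power2_eq_square algebra_simps)
  have "u1*(v1^2+v2^2) = w1*(v1^2+v2^2)" using i1(1)[of u1 u2] i1(1)[of w1 w2] dot cr by (smt (verit))
  hence "u1 = w1" using vnz by auto
  moreover have "u2*(v1^2+v2^2) = w2*(v1^2+v2^2)" using i1(2)[of u2 u1] i1(2)[of w2 w1] dot cr by (smt (verit))
  hence "u2 = w2" using vnz by auto
  ultimately show ?thesis unfolding u1_def u2_def w1_def w2_def by (simp add: prod_eq_iff)
qed



lemma dist_sq_eq: "(dist (a::real\<times>real) b)^2 = (dist c e)^2 \<Longrightarrow> dist a b = dist c e"
  by (metis power2_eq_iff_nonneg zero_le_dist)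

lemma exists_pos:
  fixes p q x :: "real \<times> real"
  assumes "p \<noteq> q" "dist p x = A" "dist q x = B"
  shows "\<exists>y. dist p y = A \<and> dist q y = B \<and> inner (y - p) (nvec (q - p)) \<ge> 0"
proof (cases "inner (x - p) (nvec (q - p)) \<ge> 0")
  case True thus ?thesis using assms by blast
next
  case False
  define u1 where "u1 = fst x - fst p"
  define u2 where "u2 = snd x - snd p"
  define v1 where "v1 = fst q - fst p"
  define v2 where "v2 = snd q - snd p"
  define k where "k = u2 * v1 - u1 * v2"
  define V where "V = v1^2 + v2^2"
  have kk: "k = inner (x - p) (nvec (q - p))" unfolding k_def u1_def u2_def v1_def v2_def
    by (simp add: inner_nvec)
  have Vp: "V \<noteq> 0" using assms(1) unfolding V_def v1_def v2_def
    by (auto simp add: prod_eq_iff sum_power2_eq_zero_iff)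
  define t where "t = 2 * k / V"
  have tV: "t * V = 2 * k" using Vp unfolding t_def by simp
  define y where "y = (fst x + t * v2, snd x - t * v1)"
  have "(dist p y)^2 = (u1 + t * v2)^2 + (u2 - t * v1)^2"
    unfolding dist_sq y_def u1_def u2_def by (simp add: power2_commute algebra_simps)
  also have "\<dots> = u1^2 + u2^2 + t * (t * V - 2 * k)" unfolding V_def k_def
    by (simp add: power2_eq_square algebra_simps)
  also have "\<dots> = (dist p x)^2" using tV unfolding dist_sq u1_def u2_def by (simp add: power2_commute)
  finally have 1: "dist p y = A" using assms(2) dist_sq_eq by blast
  have "(dist q y)^2 = (u1 - v1 + t * v2)^2 + (u2 - v2 - t * v1)^2"
    unfolding dist_sq y_def u1_def u2_def v1_def v2_def by (simp add: power2_commute algebra_simps)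
  also have "\<dots> = (u1 - v1)^2 + (u2 - v2)^2 + t * (t * V - 2 * k)" unfolding V_def k_def
    by (simp add: power2_eq_square algebra_simps)
  also have "\<dots> = (dist q x)^2" using tV unfolding dist_sq u1_def u2_def v1_def v2_def
    by (simp add: power2_commute)
  finally have 2: "dist q y = B" using assms(3) dist_sq_eq by blast
  have "inner (y - p) (nvec (q - p)) = k - t * V" unfolding y_def k_def V_def u1_def u2_def v1_def v2_def
    by (simp add: inner_nvec power2_eq_square algebra_simps)
  hence "inner (y - p) (nvec (q - p)) = - k" using tV by simp
  hence "inner (y - p) (nvec (q - p)) \<ge> 0" using False kk by simp
  thus ?thesis using 1 2 by blast
qed

lemma corner_uniq:
  fixes p q y z :: "real \<times> real"
  assumes "p \<noteq> q" "dist p y = A" "dist p z = A" "dist q y = B" "dist q z = B"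
    "inner (y - p) (nvec (q - p)) = 0"
  shows "z = y"
proof (cases "inner (z - p) (nvec (q - p)) \<ge> 0")
  case True thus ?thesis using uniq[of p q y A z B] assms by auto
next
  case False
  have "inner (y - q) (nvec (p - q)) \<ge> 0" "inner (z - q) (nvec (p - q)) \<ge> 0"
    using flip[of y q p] flip[of z q p] assms(6) False by auto
  thus ?thesis using uniq[of q p y B z A] assms by auto
qed


lemma dpt_sphere_case:
  fixes p q :: "real \<times> real"
  assumes "p \<noteq> q" "sphere p a \<inter> sphere q b \<noteq> {}"
  shows "dist p (dpt p a q b) = a \<and> dist q (dpt p a q b) = b \<and> inner (dpt p a q b - p) (nvec (q - p)) \<ge> 0"
proof -
  obtain x where "x \<in> sphere p a" "x \<in> sphere q b" using assms(2) by blast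
  hence "dist p x = a" "dist q x = b" by auto
  then obtain y where y: "dist p y = a" "dist q y = b" "inner (y - p) (nvec (q - p)) \<ge> 0"
    using exists_pos[OF assms(1)] by blast
  have "(THE z. z \<in> sphere p a \<inter> sphere q b \<and> inner (z - p) (nvec (q - p)) \<ge> 0) = y"
    apply (rule the_equality)
    using y apply simp
    using y uniq[OF assms(1)] by (metis IntD1 IntD2 mem_sphere)
  thus ?thesis using y assms(2) unfolding dpt_def by simp
qed

lemma dpt_corner:
  fixes p q x :: "real \<times> real"
  assumes "p \<noteq> q" "dist p x = a" "dist q x = b"
  shows "x = dpt p a q b \<or> x = dpt q b p a"
proof (cases "inner (x - p) (nvec (q - p)) \<ge> 0")
  case True
  have "sphere p a \<inter> sphere q b \<noteq> {}" using assms by auto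
  from dpt_sphere_case[OF assms(1) this] have "dpt p a q b = x"
    using uniq[OF assms(1)] True assms by metis
  thus ?thesis by simp
next
  case False
  have qp: "q \<noteq> p" using assms(1) by simp
  have "sphere q b \<inter> sphere p a \<noteq> {}" using assms by auto
  moreover have "inner (x - q) (nvec (p - q)) \<ge> 0" using flip[of x q p] False by simp
  ultimately have "dpt q b p a = x"
    using dpt_sphere_case[OF qp] uniq[OF qp] assms by metis
  thus ?thesis by simp
qed

lemma dpt_in:
  fixes p q :: "real \<times> real"
  assumes "a > 0" "b > 0" "\<not> (p = q \<and> a = b)" "dist p q \<le> a + b"
  shows "dist p (dpt p a q b) \<le> a \<and> dist q (dpt p a q b) \<le> b"
proof (cases "sphere p a \<inter> sphere q b \<noteq> {}")
  case True
  hence "p \<noteq> q" using assms(3) by auto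
  from dpt_sphere_case[OF this True] show ?thesis by simp
next
  case S: False
  show ?thesis
  proof (cases "p = q")
    case True
    thus ?thesis using S assms unfolding dpt_def by simp
  next
    case False
    define d where "d = dist p q"
    have d: "d > 0" using False d_def by simp
    have dle: "d \<le> \<bar>a - b\<bar>"
    proof (rule ccontr)
      assume "\<not> d \<le> \<bar>a - b\<bar>"
      then obtain x where "dist p x = a" "dist q x = b"
        using exists_int[OF False, of a b] assms d_def by auto
      thus False using S by auto
    qed
    define l0 where "l0 = d / \<bar>a - b\<bar>"
    have ab: "\<bar>a - b\<bar> > 0" using dle d by linarith
    have l0: "l0 > 0" "l0 \<le> 1" using ab d dle unfolding l0_def by (auto simp: field_simps)
    have eqd: "\<bar>l0 * a - l0 * b\<bar> = dist p q"
    proof -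
      have "\<bar>l0 * a - l0 * b\<bar> = l0 * \<bar>a - b\<bar>" using l0
        by (metis abs_mult abs_of_pos right_diff_distrib)
      thus ?thesis using ab unfolding l0_def d_def by simp
    qed
    obtain y where y: "dist p y = l0 * a" "dist q y = l0 * b" "inner (y - p) (nvec (q - p)) = 0"
      using tangent_pt[OF False _ _ eqd] l0 assms(1,2) by auto
    have "(THE z. z \<in> sphere p (l0 * a) \<inter> sphere q (l0 * b)) = y"
      apply (rule the_equality)
      using y apply simp
      using y corner_uniq[OF False] by (metis IntD1 IntD2 mem_sphere)
    hence "dpt p a q b = y" using S False unfolding dpt_def l0_def d_def Let_def by simp
    moreover have "l0 * a \<le> a" "l0 * b \<le> b" using l0 assms(1,2) by auto
    ultimately show ?thesis using y by simp
  qed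
qed



lemma nd2: "(norm (a - b))^2 = (norm a)^2 + (norm b)^2 - 2 * inner a (b::'a::real_inner)"
  by (simp add: power2_norm_eq_inner inner_diff_left inner_diff_right inner_commute)

lemma jung3:
  fixes c :: "'i \<Rightarrow> real \<times> real" and R :: "'i \<Rightarrow> real" and nu :: real
  assumes fin: "finite I" and ne: "I \<noteq> {}" and c3: "card I \<le> 3" and Rp: "\<forall>i\<in>I. R i > 0"
    and nu: "nu \<ge> 0"
    and dd: "\<forall>i\<in>I. \<forall>j\<in>I. dist (c i) (c j) \<le> nu * (R i + R j)"
  shows "\<exists>x. \<forall>i\<in>I. dist x (c i) \<le> sqrt (4/3) * nu * R i"
proof -
  obtain i0 where i0: "i0 \<in> I" using ne by auto
  define M where "M = Max ((\<lambda>i. dist (c i0) (c i) / R i) ` I)"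
  have Mge: "\<forall>i\<in>I. dist (c i0) (c i) / R i \<le> M" unfolding M_def using fin by auto
  have M: "\<forall>i\<in>I. dist (c i0) (c i) \<le> M * R i"
    using Mge Rp by (auto simp: pos_divide_le_eq)
  have M0: "M \<ge> 0" using Mge i0 Rp by (meson divide_nonneg_pos order_trans zero_le_dist)
  define T where "T = (cball (c i0) (M * R i0) \<times> {0..M}) \<inter> (\<Inter>i\<in>I. {z. dist (fst z) (c i) \<le> snd z * R i})"
  have cT: "compact T" unfolding T_def
    apply (rule compact_Int_closed)
     apply (simp add: compact_Times)
    apply (rule closed_INT)
    apply (intro ballI closed_Collect_le continuous_intros)
    done
  have zT: "(c i0, M) \<in> T" using M M0 i0 unfolding T_def by (auto simp: dist_commute)
  have "\<exists>z\<in>T. \<forall>w\<in>T. snd z \<le> snd w"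
    using continuous_attains_inf[OF cT _ continuous_on_snd[OF continuous_on_id]] zT by blast
  then obtain z where z: "z \<in> T" "\<forall>w\<in>T. snd z \<le> snd w" by blast
  define x where "x = fst z"
  define mu where "mu = snd z"
  have mu0: "0 \<le> mu" "mu \<le> M" using z(1) unfolding T_def mu_def by (auto simp: mem_Times_iff)
  have xc: "\<forall>i\<in>I. dist x (c i) \<le> mu * R i" using z(1) unfolding T_def x_def mu_def by auto
  have s0: "sqrt (4/3) * nu \<ge> 0" using nu by simp
  have key: "mu \<le> sqrt (4/3) * nu"
  proof (rule ccontr)
    assume "\<not> mu \<le> sqrt (4/3) * nu"
    hence big: "mu > sqrt (4/3) * nu" by simp
    hence mup: "mu > 0" using s0 by linarith
    define A where "A = {i\<in>I. dist x (c i) = mu * R i}"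
    define u where "u i = c i - x" for i
    have nu_i: "\<forall>i\<in>A. norm (u i) = mu * R i" unfolding A_def u_def
      by (auto simp: dist_norm norm_minus_commute)
    have upos: "\<forall>i\<in>A. norm (u i) > 0" using nu_i mup Rp unfolding A_def by auto
    have obt: "inner (u i) (u j) > -(1/2) * norm (u i) * norm (u j)" if ij: "i \<in> A" "j \<in> A" for i j
    proof (rule ccontr)
      assume "\<not> ?thesis"
      hence neg: "inner (u i) (u j) \<le> -(1/2) * norm (u i) * norm (u j)" by simp
      have IJ: "i \<in> I" "j \<in> I" using ij unfolding A_def by auto
      have "c i - c j = u i - u j" unfolding u_def by simp
      hence "(dist (c i) (c j))^2 = (norm (u i))^2 + (norm (u j))^2 - 2 * inner (u i) (u j)"
        by (simp add: dist_norm nd2)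
      also have "\<dots> \<ge> (norm (u i))^2 + (norm (u j))^2 + norm (u i) * norm (u j)" using neg by linarith
      finally have "mu^2 * ((R i)^2 + (R j)^2 + R i * R j) \<le> (dist (c i) (c j))^2"
        using nu_i ij by (simp add: power2_eq_square algebra_simps)
      also have "\<dots> \<le> (nu * (R i + R j))^2"
        using dd IJ by (simp add: power_mono)
      also have "\<dots> \<le> (4/3) * nu^2 * ((R i)^2 + (R j)^2 + R i * R j)"
      proof -
        have "3 * (R i + R j)^2 \<le> 4 * ((R i)^2 + (R j)^2 + R i * R j)"
          using sum_power2_ge_zero[of "R i - R j" 0]
          by (simp add: power2_eq_square algebra_simps)
        hence "nu^2 * (3 * (R i + R j)^2) \<le> nu^2 * (4 * ((R i)^2 + (R j)^2 + R i * R j))"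
          by (rule mult_left_mono) simp
        hence "3 * (nu^2 * (R i + R j)^2) \<le> 4 * (nu^2 * ((R i)^2 + (R j)^2 + R i * R j))"
          by (simp only: mult.left_commute)
        hence "nu^2 * (R i + R j)^2 \<le> (4/3) * (nu^2 * ((R i)^2 + (R j)^2 + R i * R j))" by linarith
        thus ?thesis by (simp only: power_mult_distrib mult.assoc)
      qed
      finally have "mu^2 * ((R i)^2 + (R j)^2 + R i * R j) \<le> ((4/3) * nu^2) * ((R i)^2 + (R j)^2 + R i * R j)"
        by simp
      moreover have "(R i)^2 + (R j)^2 + R i * R j > 0"
      proof -
        have "R i > 0" "R j > 0" using Rp IJ by auto
        thus ?thesis by (simp add: add_pos_pos)
      qed
      ultimately have "mu^2 \<le> (4/3) * nu^2" by simp
      also have "\<dots> = (sqrt (4/3) * nu)^2" by (simp add: power_mult_distrib)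
      finally have "mu \<le> sqrt (4/3) * nu" using s0 mup by (simp add: power2_le_iff_abs_le)
      thus False using big by simp
    qed
    have finA: "finite A" "A \<subseteq> I" using fin unfolding A_def by auto
    have cA: "card A \<le> 3" using card_mono[OF fin finA(2)] c3 by simp
    define e where "e = (\<Sum>i\<in>A. (1 / norm (u i)) *\<^sub>R u i)"
    have epos: "inner e (u j) > 0" if j: "j \<in> A" for j
    proof -
      have "inner e (u j) = (\<Sum>i\<in>A. inner (u i) (u j) / norm (u i))"
        unfolding e_def by (simp add: inner_sum_left)
      also have "\<dots> = inner (u j) (u j) / norm (u j) + (\<Sum>i\<in>A - {j}. inner (u i) (u j) / norm (u i))"
        using sum.remove[OF finA(1) j] by simp
      also have "inner (u j) (u j) / norm (u j) = norm (u j)"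
        using upos j by (simp add: power2_norm_eq_inner[symmetric] power2_eq_square)
      finally have eq: "inner e (u j) = norm (u j) + (\<Sum>i\<in>A - {j}. inner (u i) (u j) / norm (u i))" .
      show ?thesis
      proof (cases "A - {j} = {}")
        case True
        have "(\<Sum>i\<in>A - {j}. inner (u i) (u j) / norm (u i)) = 0" by (simp only: True sum.empty)
        thus ?thesis using eq upos j by simp
      next
        case False
        have "(\<Sum>i\<in>A - {j}. -(1/2) * norm (u j)) < (\<Sum>i\<in>A - {j}. inner (u i) (u j) / norm (u i))"
        proof (rule sum_strict_mono)
          show "finite (A - {j})" using finA by simp
          show "A - {j} \<noteq> {}" by fact
          fix i assume i: "i \<in> A - {j}"
          have "inner (u i) (u j) > -(1/2) * norm (u i) * norm (u j)" using obt i j by auto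
          moreover have "norm (u i) > 0" using upos i by auto
          ultimately show "-(1/2) * norm (u j) < inner (u i) (u j) / norm (u i)"
            by (simp add: field_simps)
        qed
        moreover have "card (A - {j}) \<le> 2" using cA j finA by simp
        hence "(\<Sum>i\<in>A - {j}. -(1/2) * norm (u j)) \<ge> - norm (u j)"
          using upos j by (simp add: mult_le_cancel_right2 less_le)
        ultimately show ?thesis using eq by linarith
      qed
    qed
    have ne1: "(norm e)^2 + 1 > 0" by (smt (verit) zero_le_power2)
    have ne2: "norm e + 1 > 0" by (smt (verit) norm_ge_zero)
    have ev: "\<forall>j\<in>I. eventually (\<lambda>t. dist (x + t *\<^sub>R e) (c j) < mu * R j) (at_right 0)"
    proof
      fix j assume jI: "j \<in> I"
      show "eventually (\<lambda>t. dist (x + t *\<^sub>R e) (c j) < mu * R j) (at_right 0)"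
      proof (cases "j \<in> A")
        case True
        define a where "a = inner e (u j)"
        have a: "a > 0" using epos True a_def by simp
        show ?thesis unfolding eventually_at_right_field
        proof (intro exI[of _ "2 * a / ((norm e)^2 + 1)"] conjI allI impI)
          show "0 < 2 * a / ((norm e)^2 + 1)" using a ne1 by simp
          fix t :: real assume t: "0 < t" "t < 2 * a / ((norm e)^2 + 1)"
          have "t * ((norm e)^2 + 1) < 2 * a" using t ne1 by (simp add: pos_less_divide_eq mult.commute)
          moreover have "t * ((norm e)^2 + 1) = t * (norm e)^2 + t" by (simp add: distrib_left)
          ultimately have "t * (norm e)^2 < 2 * a" using t(1) by linarith
          hence "t * (t * (norm e)^2) < t * (2 * a)" using t(1) by simp
          have dd2: "(dist (x + t *\<^sub>R e) (c j))^2 = (norm (t *\<^sub>R e - u j))^2"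
            unfolding u_def dist_norm by (simp add: algebra_simps)
          also have "\<dots> = t^2 * (norm e)^2 + (norm (u j))^2 - 2 * t * a"
            unfolding nd2 a_def by (simp add: power_mult_distrib)
          also have "\<dots> < (norm (u j))^2" using \<open>t * (t * (norm e)^2) < t * (2 * a)\<close>
            by (simp add: power2_eq_square algebra_simps)
          finally have "dist (x + t *\<^sub>R e) (c j) < norm (u j)"
            by (simp add: power2_less_imp_less)
          thus "dist (x + t *\<^sub>R e) (c j) < mu * R j" using nu_i True by simp
        qed
      next
        case False
        define s where "s = mu * R j - dist x (c j)"
        have s: "s > 0" using False xc jI unfolding s_def A_def by force
        show ?thesis unfolding eventually_at_right_field
        proof (intro exI[of _ "s / (norm e + 1)"] conjI allI impI)
          show "0 < s / (norm e + 1)" using s ne2 by simp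
          fix t :: real assume t: "0 < t" "t < s / (norm e + 1)"
          have "t * (norm e + 1) < s" using t ne2 by (simp add: pos_less_divide_eq mult.commute)
          hence lt: "t * norm e < s" using t(1) by (simp add: algebra_simps)
          have "dist (x + t *\<^sub>R e) (c j) \<le> dist x (c j) + dist (x + t *\<^sub>R e) x"
            using dist_triangle[of "x + t *\<^sub>R e" "c j" x] by linarith
          also have "dist (x + t *\<^sub>R e) x = t * norm e" using t(1) by (simp add: dist_norm)
          finally show "dist (x + t *\<^sub>R e) (c j) < mu * R j" using lt unfolding s_def by simp
        qed
      qed
    qed
    have "eventually (\<lambda>t. \<forall>j\<in>I. dist (x + t *\<^sub>R e) (c j) < mu * R j) (at_right (0::real))"
      using eventually_ball_finite[OF fin ev] .
    then obtain t where t: "\<forall>j\<in>I. dist (x + t *\<^sub>R e) (c j) < mu * R j"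
      using eventually_happens'[of "at_right (0::real)"] by force
    define y where "y = x + t *\<^sub>R e"
    define mu' where "mu' = Max ((\<lambda>j. dist y (c j) / R j) ` I)"
    have lt: "mu' < mu" unfolding mu'_def using fin ne t Rp by (auto simp: y_def pos_divide_less_eq)
    have ge: "\<forall>j\<in>I. dist y (c j) / R j \<le> mu'" unfolding mu'_def using fin by auto
    hence yc: "\<forall>j\<in>I. dist y (c j) \<le> mu' * R j" using Rp by (auto simp: pos_divide_le_eq)
    have mu'0: "mu' \<ge> 0" using ge i0 Rp by (meson divide_nonneg_pos order_trans zero_le_dist)
    have "(y, mu') \<in> T" unfolding T_def
    proof (intro IntI)
      have "dist (c i0) y \<le> M * R i0"
        using yc i0 lt mu0 Rp by (smt (verit, best) dist_commute mult_right_mono)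
      thus "(y, mu') \<in> cball (c i0) (M * R i0) \<times> {0..M}" using mu'0 lt mu0 by auto
      show "(y, mu') \<in> (\<Inter>i\<in>I. {z. dist (fst z) (c i) \<le> snd z * R i})" using yc by auto
    qed
    hence "mu \<le> mu'" using z(2) unfolding mu_def by force
    thus False using lt by simp
  qed
  show ?thesis
  proof (intro exI ballI)
    fix i assume "i \<in> I"
    hence "dist x (c i) \<le> mu * R i" "R i > 0" using xc Rp by auto
    thus "dist x (c i) \<le> sqrt (4/3) * nu * R i" using key
      by (smt (verit, best) mult_right_mono)
  qed
qed



lemma vr_bound:
  assumes "i < m" "j < m" "i \<noteq> j" "r i > 0" "r j > 0"
  shows "dist (c i) (c j) \<le> vr_scale m c r * (r i + r j)"
proof -
  define S where "S = {dist (c i) (c j) / (r i + r j) | i j. i < j \<and> j < m}"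
  have fin: "finite S"
  proof -
    have "S \<subseteq> (\<lambda>(i,j). dist (c i) (c j) / (r i + r j)) ` ({..<m} \<times> {..<m})"
      unfolding S_def by auto
    thus ?thesis by (rule finite_subset) simp
  qed
  have "dist (c i) (c j) / (r i + r j) \<in> S"
  proof (cases "i < j")
    case True thus ?thesis using assms unfolding S_def by blast
  next
    case False
    hence "j < i" using assms(3) by simp
    hence "dist (c j) (c i) / (r j + r i) \<in> S" using assms unfolding S_def by blast
    thus ?thesis by (simp add: dist_commute add.commute)
  qed
  hence "dist (c i) (c j) / (r i + r j) \<le> vr_scale m c r"
    using fin unfolding vr_scale_def S_def[symmetric] by simp
  thus ?thesis using assms(4,5) by (simp add: pos_divide_le_eq)
qed

lemma rho_ge:
  assumes "m \<ge> 3"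
  shows "rho m c r lam \<ge> 0 \<longleftrightarrow> (\<exists>i j. i < m \<and> j < m \<and> i \<noteq> j \<and>
     (\<forall>k<m. k \<noteq> i \<and> k \<noteq> j \<longrightarrow> norm (dpt_scaled c r lam i j - c k) \<le> lam * r k))"
proof -
  define G where "G i j = Min {lam * r k - norm (dpt_scaled c r lam i j - c k) | k. k < m \<and> k \<noteq> i \<and> k \<noteq> j}" for i j
  define OS where "OS = {G i j | i j. i < m \<and> j < m \<and> i \<noteq> j}"
  have rOS: "rho m c r lam = Max OS" unfolding rho_def OS_def G_def by simp
  have finOS: "finite OS"
  proof -
    have "OS \<subseteq> (\<lambda>(i,j). G i j) ` ({..<m} \<times> {..<m})" unfolding OS_def by auto
    thus ?thesis by (rule finite_subset) simp
  qed
  have "G 0 1 \<in> OS" unfolding OS_def using assms by force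
  hence neOS: "OS \<noteq> {}" by auto
  have Gge: "0 \<le> G i j \<longleftrightarrow> (\<forall>k<m. k \<noteq> i \<and> k \<noteq> j \<longrightarrow> norm (dpt_scaled c r lam i j - c k) \<le> lam * r k)"
    if "i < m" "j < m" for i j
  proof -
    define In where "In = {lam * r k - norm (dpt_scaled c r lam i j - c k) | k. k < m \<and> k \<noteq> i \<and> k \<noteq> j}"
    have fin: "finite In" unfolding In_def by simp
    have "\<exists>k. k < 3 \<and> k \<noteq> i \<and> k \<noteq> j"
      by (rule exI[of _ "if i \<noteq> 0 \<and> j \<noteq> 0 then 0 else if i \<noteq> 1 \<and> j \<noteq> 1 then 1 else 2"]) auto
    then obtain k where k: "k < 3" "k \<noteq> i" "k \<noteq> j" by blast
    have "lam * r k - norm (dpt_scaled c r lam i j - c k) \<in> In" unfolding In_def using k assms by force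
    hence ne: "In \<noteq> {}" by auto
    have "0 \<le> G i j \<longleftrightarrow> (\<forall>a\<in>In. 0 \<le> a)" unfolding G_def In_def[symmetric] using fin ne by simp
    also have "\<dots> \<longleftrightarrow> (\<forall>k<m. k \<noteq> i \<and> k \<noteq> j \<longrightarrow> norm (dpt_scaled c r lam i j - c k) \<le> lam * r k)"
      unfolding In_def by auto
    finally show ?thesis .
  qed
  have "rho m c r lam \<ge> 0 \<longleftrightarrow> (\<exists>a\<in>OS. 0 \<le> a)" unfolding rOS using finOS neOS Max_ge_iff by blast
  also have "\<dots> \<longleftrightarrow> (\<exists>i j. i < m \<and> j < m \<and> i \<noteq> j \<and> 0 \<le> G i j)" unfolding OS_def by blast
  also have "\<dots> \<longleftrightarrow> (\<exists>i j. i < m \<and> j < m \<and> i \<noteq> j \<and>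
     (\<forall>k<m. k \<noteq> i \<and> k \<noteq> j \<longrightarrow> norm (dpt_scaled c r lam i j - c k) \<le> lam * r k))"
    using Gge by blast
  finally show ?thesis .
qed

lemma far_point:
  fixes a b :: "real \<times> real"
  assumes "R \<ge> 0"
  shows "\<exists>y. dist a y = R \<and> dist b y = dist a b + R"
proof (cases "a = b")
  case True
  show ?thesis using assms True by (intro exI[of _ "a + (R, 0)"]) (simp add: dist_norm)
next
  case False
  define d where "d = dist a b"
  have d: "d > 0" using False d_def by simp
  define y where "y = a + (R / d) *\<^sub>R (a - b)"
  have nd: "norm (a - b) = d" by (simp add: d_def dist_norm)
  have "dist a y = R" using assms d nd by (simp add: y_def dist_norm)
  moreover have "y - b = (1 + R / d) *\<^sub>R (a - b)" by (simp add: y_def algebra_simps)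
  hence "dist b y = (1 + R / d) * d" using nd d assms
    by (simp add: dist_norm norm_minus_commute[of b y])
  hence "dist b y = d + R" using d by (simp add: distrib_right)
  ultimately show ?thesis unfolding d_def by blast
qed



lemma B_iff:
  fixes m :: nat and c :: "nat \<Rightarrow> real \<times> real" and r :: "nat \<Rightarrow> real" and lam :: real
  assumes m3: "m \<ge> 3"
    and rp: "\<forall>i<m. r i > 0"
    and dist: "\<forall>i<m. \<forall>j<m. i \<noteq> j \<longrightarrow> cball (c i) (r i) \<noteq> cball (c j) (r j)"
    and nup: "vr_scale m c r > 0"
    and lam: "lam \<ge> vr_scale m c r"
  shows "(\<Inter>i\<in>{..<m}. cball (c i) (lam * r i)) \<noteq> {} \<longleftrightarrow> rho m c r lam \<ge> 0"
proof -
  define K where "K = (\<Inter>i\<in>{..<m}. cball (c i) (lam * r i))"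
  have lp: "lam > 0" using nup lam by linarith
  have dpt_in2: "dist (c i) (dpt_scaled c r lam i j) \<le> lam * r i \<and> dist (c j) (dpt_scaled c r lam i j) \<le> lam * r j"
    if ij: "i < m" "j < m" "i \<noteq> j" for i j
  proof -
    have ri: "r i > 0" "r j > 0" using rp ij by auto
    have nd: "\<not> (c i = c j \<and> lam * r i = lam * r j)"
    proof
      assume "c i = c j \<and> lam * r i = lam * r j"
      hence "c i = c j" "r i = r j" using lp by auto
      thus False using dist ij by metis
    qed
    have "dist (c i) (c j) \<le> vr_scale m c r * (r i + r j)" using vr_bound[OF ij ri] .
    also have "\<dots> \<le> lam * (r i + r j)" using lam ri by (simp add: mult_right_mono)
    finally have "dist (c i) (c j) \<le> lam * r i + lam * r j" by (simp add: distrib_left)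
    thus ?thesis using dpt_in[of "lam * r i" "lam * r j" "c i" "c j"] ri lp nd
      unfolding dpt_scaled_def by simp
  qed
  have memK: "x \<in> K \<longleftrightarrow> (\<forall>k<m. dist (c k) x \<le> lam * r k)" for x unfolding K_def by auto
  have rho_of: "rho m c r lam \<ge> 0" if "i < m" "j < m" "i \<noteq> j" "dpt_scaled c r lam i j \<in> K" for i j
  proof -
    have "\<forall>k<m. k \<noteq> i \<and> k \<noteq> j \<longrightarrow> norm (dpt_scaled c r lam i j - c k) \<le> lam * r k"
      using that(4) unfolding memK by (simp add: dist_norm norm_minus_commute)
    thus ?thesis using rho_ge[OF m3] that(1-3) by blast
  qed
  show ?thesis unfolding K_def[symmetric]
  proof
    assume "rho m c r lam \<ge> 0"
    then obtain i j where ij: "i < m" "j < m" "i \<noteq> j"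
      and allk: "\<forall>k<m. k \<noteq> i \<and> k \<noteq> j \<longrightarrow> norm (dpt_scaled c r lam i j - c k) \<le> lam * r k"
      using rho_ge[OF m3] by blast
    have "dpt_scaled c r lam i j \<in> K" unfolding memK
    proof (intro allI impI)
      fix k assume k: "k < m"
      show "dist (c k) (dpt_scaled c r lam i j) \<le> lam * r k"
      proof (cases "k = i \<or> k = j")
        case True thus ?thesis using dpt_in2[OF ij] by auto
      next
        case False thus ?thesis using allk k by (simp add: dist_norm norm_minus_commute)
      qed
    qed
    thus "K \<noteq> {}" by auto
  next
    assume Kne: "K \<noteq> {}"
    have m0: "0 < m" using m3 by simp
    have clK: "closed K" unfolding K_def by (intro closed_INT ballI closed_cball)
    have bK: "bounded K"
      by (rule bounded_subset[OF bounded_cball[of "c 0" "lam * r 0"]]) (use m0 in \<open>auto simp: K_def\<close>)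
    have cK: "compact K" using clK bK by (simp add: compact_eq_bounded_closed)
    have "\<exists>p\<in>K. \<forall>y\<in>K. fst y \<le> fst p"
      using continuous_attains_sup[OF cK Kne continuous_on_fst[OF continuous_on_id]] by blast
    then obtain p where pK: "p \<in> K" and pmax: "\<forall>y\<in>K. fst y \<le> fst p" by blast
    have "\<exists>i<m. dist (c i) p = lam * r i"
    proof (rule ccontr)
      assume "\<not> ?thesis"
      hence lt: "\<forall>i<m. dist (c i) p < lam * r i" using pK unfolding memK by force
      define U where "U = (\<Inter>i\<in>{..<m}. ball (c i) (lam * r i))"
      have "open U" unfolding U_def by (intro open_INT ballI open_ball) simp
      moreover have "p \<in> U" unfolding U_def using lt by auto
      ultimately obtain e where e: "e > 0" "ball p e \<subseteq> U" by (meson openE)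
      define q where "q = p + (e/2, 0)"
      have "dist p q < e" using e(1) by (simp add: q_def dist_norm)
      hence "q \<in> U" using e(2) by auto
      hence "q \<in> K" unfolding U_def memK by (auto simp: less_imp_le)
      moreover have "fst q > fst p" using e(1) by (simp add: q_def)
      ultimately show False using pmax by force
    qed
    then obtain i where i: "i < m" "dist (c i) p = lam * r i" by blast
    have ri: "lam * r i > 0" using rp i lp by simp
    show "rho m c r lam \<ge> 0"
    proof (cases "\<forall>k<m. cball (c i) (lam * r i) \<subseteq> cball (c k) (lam * r k)")
      case True
      define j where "j = (if i = 0 then 1 else 0::nat)"
      have j: "j < m" "i \<noteq> j" using m3 unfolding j_def by auto
      have "dist (c i) (dpt_scaled c r lam i j) \<le> lam * r i" using dpt_in2[OF i(1) j(1) j(2)] by simp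
      hence Din: "dpt_scaled c r lam i j \<in> cball (c i) (lam * r i)" by simp
      have "dpt_scaled c r lam i j \<in> K" unfolding memK
      proof (intro allI impI)
        fix k assume "k < m"
        hence "dpt_scaled c r lam i j \<in> cball (c k) (lam * r k)" using True Din by blast
        thus "dist (c k) (dpt_scaled c r lam i j) \<le> lam * r k" by simp
      qed
      thus ?thesis using rho_of[OF i(1) j(1) j(2)] by simp
    next
      case False
      then obtain k where k: "k < m" "\<not> cball (c i) (lam * r i) \<subseteq> cball (c k) (lam * r k)" by blast
      hence far: "dist (c i) (c k) + lam * r i > lam * r k" using ri
        by (simp add: cball_subset_cball_iff)
      obtain y where y: "dist (c i) y = lam * r i" "dist (c k) y = dist (c k) (c i) + lam * r i"
        using far_point[of "lam * r i" "c i" "c k"] ri by (auto simp: dist_commute)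
      have yK: "y \<notin> K" using y far k unfolding memK by (auto simp: dist_commute)
      define S where "S = sphere (c i) (lam * r i)"
      have conS: "connected S" unfolding S_def by (rule connected_sphere) simp
      have "\<exists>z\<in>S \<inter> K. \<exists>k<m. k \<noteq> i \<and> dist (c k) z = lam * r k"
      proof (rule ccontr)
        assume N: "\<not> ?thesis"
        define U where "U = (\<Inter>k\<in>{..<m} - {i}. ball (c k) (lam * r k))"
        have oU: "open U" unfolding U_def by (intro open_INT ballI open_ball) simp
        have oV: "open (- K)" using clK by (simp add: open_Compl)
        have 1: "U \<inter> (- K) \<inter> S = {}"
        proof -
          { fix z assume z: "z \<in> U" "z \<in> S"
            have "z \<in> K" unfolding memK
            proof (intro allI impI)
              fix k assume "k < m"
              thus "dist (c k) z \<le> lam * r k" using z unfolding U_def S_def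
                by (cases "k = i") (auto simp: dist_commute less_imp_le)
            qed }
          thus ?thesis by blast
        qed
        have 2: "S \<subseteq> U \<union> (- K)"
        proof
          fix z assume z: "z \<in> S"
          show "z \<in> U \<union> (- K)"
          proof (cases "z \<in> K")
            case True
            have "\<forall>k\<in>{..<m} - {i}. dist (c k) z < lam * r k"
            proof
              fix k assume "k \<in> {..<m} - {i}"
              hence "k < m" "k \<noteq> i" by auto
              moreover have "dist (c k) z \<le> lam * r k" using True \<open>k < m\<close> unfolding memK by simp
              ultimately show "dist (c k) z < lam * r k" using N True z by force
            qed
            thus ?thesis unfolding U_def by auto
          qed simp
        qed
        have "p \<in> S" using i unfolding S_def by simp
        hence "p \<in> U" using 2 pK by auto
        hence 3: "U \<inter> S \<noteq> {}" using \<open>p \<in> S\<close> by auto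
        have "y \<in> S" using y unfolding S_def by simp
        hence 4: "(- K) \<inter> S \<noteq> {}" using yK by auto
        show False using connectedD[OF conS oU oV 1 2] 3 4 by blast
      qed
      then obtain z k where z: "z \<in> S" "z \<in> K" and k: "k < m" "k \<noteq> i" "dist (c k) z = lam * r k"
        by blast
      have zi: "dist (c i) z = lam * r i" using z unfolding S_def by simp
      have cne: "c i \<noteq> c k"
      proof
        assume "c i = c k"
        hence "lam * r i = lam * r k" using zi k(3) by metis
        hence "r i = r k" using lp by (metis mult_left_cancel less_irrefl)
        thus False using dist \<open>c i = c k\<close> i(1) k(1,2) by metis
      qed
      from dpt_corner[OF cne zi k(3)]
      have "z = dpt_scaled c r lam i k \<or> z = dpt_scaled c r lam k i" unfolding dpt_scaled_def .
      thus ?thesis using rho_of[OF i(1) k(1) k(2)[symmetric]] rho_of[OF k(1) i(1) k(2)] z(2) by auto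
    qed
  qed
qed



theorem lemma4p2:
  fixes m :: nat and c :: "nat \<Rightarrow> real \<times> real" and r :: "nat \<Rightarrow> real" and lam :: real
  assumes "m \<ge> 3"
    and "\<forall>i<m. r i > 0"
    and "\<forall>i<m. \<forall>j<m. i \<noteq> j \<longrightarrow> cball (c i) (r i) \<noteq> cball (c j) (r j)"
    and "vr_scale m c r > 0"
    and "lam \<ge> vr_scale m c r"
  shows "((\<Inter>i\<in>{..<m}. cball (c i) (lam * r i)) \<noteq> {} \<longleftrightarrow> rho m c r lam \<ge> 0)
         \<and> rho m c r (sqrt (4/3) * vr_scale m c r) \<ge> 0"
proof
  show "(\<Inter>i\<in>{..<m}. cball (c i) (lam * r i)) \<noteq> {} \<longleftrightarrow> rho m c r lam \<ge> 0"
    by (rule B_iff[OF assms])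
next
  define nu where "nu = vr_scale m c r"
  define l0 where "l0 = sqrt (4/3) * nu"
  have nup: "nu > 0" using assms(4) nu_def by simp
  have s1: "sqrt (4/3::real) \<ge> 1" by (simp add: real_le_rsqrt)
  have l0ge: "l0 \<ge> nu" unfolding l0_def using s1 nup
    by (metis mult_1 mult_right_mono less_imp_le)
  have l0p: "l0 > 0" using l0ge nup by linarith
  define f where "f i = cball (c i) (l0 * r i)" for i
  have inj: "inj_on f {..<m}"
  proof (rule inj_onI)
    fix i j assume ij: "i \<in> {..<m}" "j \<in> {..<m}" "f i = f j"
    show "i = j"
    proof (rule ccontr)
      assume ne: "i \<noteq> j"
      have "r i > 0" "r j > 0" using assms(2) ij by auto
      hence pos: "\<not> l0 * r i < 0" using l0p by (simp add: not_less)
      have "(l0 * r i < 0 \<and> l0 * r j < 0) \<or> (c i = c j \<and> l0 * r i = l0 * r j)"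
        using ij(3) unfolding f_def by (simp only: cball_eq_cball_iff)
      hence "c i = c j \<and> l0 * r i = l0 * r j" using pos by blast
      hence "c i = c j" "r i = r j" using l0p by auto
      thus False using assms(3) ij ne by (metis lessThan_iff)
    qed
  qed
  have "\<Inter>(f ` {..<m}) \<noteq> {}"
  proof (rule Helly)
    show "DIM(real \<times> real) + 1 \<le> card (f ` {..<m})"
      using card_image[OF inj] assms(1) by simp
    show "\<forall>s\<in>f ` {..<m}. convex s" unfolding f_def by auto
    fix T assume T: "T \<subseteq> f ` {..<m}" "card T = DIM(real \<times> real) + 1"
    then obtain J where J: "J \<subseteq> {..<m}" "T = f ` J" by (auto simp: subset_image_iff)
    have cJ: "card J = 3" using T(2) J card_image[OF inj_on_subset[OF inj J(1)]] by simp
    have finJ: "finite J" using J(1) finite_subset by blast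
    have "\<exists>x. \<forall>i\<in>J. dist x (c i) \<le> sqrt (4/3) * nu * r i"
    proof (rule jung3)
      show "finite J" by fact
      show "J \<noteq> {}" using cJ by auto
      show "card J \<le> 3" using cJ by simp
      show "\<forall>i\<in>J. r i > 0" using J(1) assms(2) by auto
      show "nu \<ge> 0" using nup by simp
      show "\<forall>i\<in>J. \<forall>j\<in>J. dist (c i) (c j) \<le> nu * (r i + r j)"
      proof (intro ballI)
        fix i j assume "i \<in> J" "j \<in> J"
        hence ij: "i < m" "j < m" using J(1) by auto
        have rp: "r i > 0" "r j > 0" using ij assms(2) by auto
        show "dist (c i) (c j) \<le> nu * (r i + r j)"
        proof (cases "i = j")
          case True thus ?thesis using rp nup by simp
        next
          case False thus ?thesis using vr_bound[OF ij False rp] unfolding nu_def by simp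
        qed
      qed
    qed
    then obtain x where x: "\<forall>i\<in>J. dist x (c i) \<le> sqrt (4/3) * nu * r i" by blast
    have "x \<in> \<Inter>T" unfolding J(2) f_def l0_def using x by (auto simp: dist_commute)
    thus "\<Inter>T \<noteq> {}" by auto
  qed
  hence "(\<Inter>i\<in>{..<m}. cball (c i) (l0 * r i)) \<noteq> {}" unfolding f_def .
  moreover have "l0 \<ge> vr_scale m c r" using l0ge nu_def by simp
  ultimately have "rho m c r l0 \<ge> 0" using B_iff[OF assms(1-4)] by blast
  thus "rho m c r (sqrt (4/3) * vr_scale m c r) \<ge> 0" unfolding l0_def nu_def .
qed


end
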